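(* Let $n\ge2$, $\mathbb{Z}_n=\mathbb{Z}/n\mathbb{Z}$, $\mathcal{P}=\{(x_1,\dots,x_{n-1})\in\mathbb{Z}_n^{n-1}\mid x_1,\dots,x_{n-1}\text{ pairwise different}\}$ and $\mathcal{S}=\{r\in\mathbb{Z}_n^{n-1}\mid \exists\,x,y\in\mathcal{P}: r=x+y\}$. Let $\mathbf{1}=(1,\dots,1)\in\mathbb{Z}_n^{n-1}$. Then: (i) $\gamma\mathbf{1}\in\mathcal{S}$ for all $\gamma\in\mathbb{Z}_n$; (ii) if $r\in\mathcal{S}$, then every vector obtained from $r$ by permuting its $n-1$ coordinates lies in $\mathcal{S}$; (iii) if $r\in\mathcal{S}$, then $\gamma r\in\mathcal{S}$ for every unit $\gamma$ of the ring $\mathbb{Z}_n$; (iv) if $r\in\mathcal{S}$, then $r+\gamma\mathbf{1}\in\mathcal{S}$ for all $\gamma\in\mathbb{Z}_n$; (v) $\mathcal{P}\subseteq\mathcal{S}$. *)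

theory Defs
  imports Main "HOL-Combinatorics.Permutations"
begin

text \<open>Elements of Z_n are represented by their canonical representatives in {0..<n} (as int).
  Vectors in Z_n^(n-1) are int lists of length n-1 with entries in {0..<n};
  coordinate i (0-based) is xs ! i.\<close>

definition zvecs :: "nat \<Rightarrow> int list set" where
  "zvecs n = {xs. length xs = n - 1 \<and> set xs \<subseteq> {0..<int n}}"

definition zadd :: "nat \<Rightarrow> int list \<Rightarrow> int list \<Rightarrow> int list" where
  "zadd n xs ys = map2 (\<lambda>a b. (a + b) mod int n) xs ys"

definition zsmult :: "nat \<Rightarrow> int \<Rightarrow> int list \<Rightarrow> int list" where
  "zsmult n c xs = map (\<lambda>a. (c * a) mod int n) xs"

definition zone :: "nat \<Rightarrow> int list" where
  "zone n = replicate (n - 1) (1 mod int n)"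

definition Pset :: "nat \<Rightarrow> int list set" where
  "Pset n = {x \<in> zvecs n. distinct x}"

definition Sset :: "nat \<Rightarrow> int list set" where
  "Sset n = {r. \<exists>x\<in>Pset n. \<exists>y\<in>Pset n. r = zadd n x y}"

definition zunit :: "nat \<Rightarrow> int \<Rightarrow> bool" where
  "zunit n c \<longleftrightarrow> c \<in> {0..<int n} \<and> (\<exists>d\<in>{0..<int n}. (c * d) mod int n = 1 mod int n)"

definition permute_coords :: "(nat \<Rightarrow> nat) \<Rightarrow> int list \<Rightarrow> int list" where
  "permute_coords \<sigma> r = map (\<lambda>i. r ! \<sigma> i) [0..<length r]"

end

theory Submission
  imports Defs
begin

lemma zadd_len[simp]: "length (zadd n xs ys) = min (length xs) (length ys)"
  by (simp add: zadd_def)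

lemma zadd_nth[simp]: "i < length xs \<Longrightarrow> i < length ys \<Longrightarrow> zadd n xs ys ! i = (xs!i + ys!i) mod int n"
  by (simp add: zadd_def)

lemma affine_inj:
  fixes N :: int
  assumes "(u*d) mod N = 1 mod N" "p \<in> {0..<N}" "q \<in> {0..<N}" "(c + u*p) mod N = (c + u*q) mod N"
  shows "p = q"
proof -
  have "(u*p) mod N = ((c + u*p) - c) mod N" by simp
  also have "\<dots> = ((c + u*q) - c) mod N" using assms(4) by (metis mod_diff_left_eq)
  finally have e: "(u*p) mod N = (u*q) mod N" by simp
  have "p = p mod N" using assms(2) by simp
  also have "\<dots> = ((u*d mod N) * p) mod N" using assms(1) by (simp add: mod_mult_left_eq)
  also have "\<dots> = (d * (u*p)) mod N" by (metis mod_mult_left_eq mult.assoc mult.commute)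
  also have "\<dots> = (d * ((u*p) mod N)) mod N" by (simp add: mod_mult_right_eq)
  also have "\<dots> = (d * ((u*q) mod N)) mod N" using e by simp
  also have "\<dots> = (d * (u*q)) mod N" by (simp add: mod_mult_right_eq)
  also have "\<dots> = ((u*d mod N) * q) mod N" by (metis mod_mult_left_eq mult.assoc mult.commute)
  also have "\<dots> = q" using assms(1,3) by (simp add: mod_mult_left_eq)
  finally show ?thesis .
qed

lemma zsmult_one: "n \<ge> 2 \<Longrightarrow> \<gamma> \<in> {0..<int n} \<Longrightarrow> zsmult n \<gamma> (zone n) = replicate (n-1) \<gamma>"
  by (simp add: zsmult_def zone_def)

lemma Pset_map:
  assumes "x \<in> Pset n" "n \<ge> 2"
    "\<And>a b. a \<in> {0..<int n} \<Longrightarrow> b \<in> {0..<int n} \<Longrightarrow> f a = f b \<Longrightarrow> a = b"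
    "\<And>a. a \<in> {0..<int n} \<Longrightarrow> f a \<in> {0..<int n}"
  shows "map f x \<in> Pset n"
proof -
  have x: "length x = n - 1" "set x \<subseteq> {0..<int n}" "distinct x"
    using assms(1) by (auto simp: Pset_def zvecs_def)
  have "inj_on f (set x)" using x(2) assms(3) by (meson inj_onI subsetD)
  then show ?thesis using x assms(4) by (auto simp: Pset_def zvecs_def distinct_map)
qed

lemma part1:
  assumes "n \<ge> 2" "\<gamma> \<in> {0..<int n}"
  shows "zsmult n \<gamma> (zone n) \<in> Sset n"
proof -
  define N where "N = int n"
  have N: "N \<ge> 2" using assms N_def by simp
  define x where "x = map int [0..<n-1]"
  have xP: "x \<in> Pset n" by (auto simp: x_def Pset_def zvecs_def distinct_map)
  define y where "y = map (\<lambda>a. (\<gamma> + (-1)*a) mod N) x"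
  have yP: "y \<in> Pset n" unfolding y_def
    apply (rule Pset_map[OF xP assms(1)])
    subgoal for a b by (rule affine_inj[of "-1" "-1" N a b \<gamma>]) (auto simp: N_def)
    using N N_def by auto
  have "zsmult n \<gamma> (zone n) = zadd n x y"
    using assms by (intro nth_equalityI) (auto simp: zsmult_one x_def y_def N_def mod_add_right_eq)
  then show ?thesis using xP yP by (auto simp: Sset_def)
qed



lemma Pset_len: "x \<in> Pset n \<Longrightarrow> length x = n - 1"
  by (simp add: Pset_def zvecs_def)

lemma perm_P:
  assumes "x \<in> Pset n" "\<sigma> permutes {..<n-1}"
  shows "permute_coords \<sigma> x \<in> Pset n"
proof -
  have x: "length x = n - 1" "set x \<subseteq> {0..<int n}" "distinct x"
    using assms(1) by (auto simp: Pset_def zvecs_def)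
  have s: "\<And>i. i < n - 1 \<Longrightarrow> \<sigma> i < n - 1" using assms(2) permutes_in_image by fastforce
  have inj: "inj_on (\<lambda>i. x ! \<sigma> i) {0..<n-1}"
  proof (rule inj_onI)
    fix i j assume "i \<in> {0..<n-1}" "j \<in> {0..<n-1}" "x ! \<sigma> i = x ! \<sigma> j"
    then have "\<sigma> i = \<sigma> j" using s x by (simp add: nth_eq_iff_index_eq)
    then show "i = j" using permutes_inj[OF assms(2)] by (simp add: inj_eq)
  qed
  have "set (permute_coords \<sigma> x) \<subseteq> set x"
    using s x(1) by (auto simp: permute_coords_def)
  then show ?thesis using x inj
    by (auto simp: Pset_def zvecs_def permute_coords_def distinct_map)
qed

lemma perm_add:
  assumes "length x = n - 1" "length y = n - 1" "\<sigma> permutes {..<n-1}"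
  shows "permute_coords \<sigma> (zadd n x y) = zadd n (permute_coords \<sigma> x) (permute_coords \<sigma> y)"
proof -
  have s: "\<And>i. i < n - 1 \<Longrightarrow> \<sigma> i < n - 1" using assms(3) permutes_in_image by fastforce
  show ?thesis using assms s by (intro nth_equalityI) (auto simp: permute_coords_def)
qed

lemma part2:
  assumes "r \<in> Sset n" "\<sigma> permutes {..<n-1}"
  shows "permute_coords \<sigma> r \<in> Sset n"
proof -
  obtain x y where xy: "x \<in> Pset n" "y \<in> Pset n" "r = zadd n x y" using assms(1) by (auto simp: Sset_def)
  show ?thesis using xy perm_add[OF Pset_len[OF xy(1)] Pset_len[OF xy(2)] assms(2)]
      perm_P[OF xy(1) assms(2)] perm_P[OF xy(2) assms(2)] by (auto simp: Sset_def)
qed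

lemma part3:
  assumes "r \<in> Sset n" "zunit n \<gamma>" "n \<ge> 2"
  shows "zsmult n \<gamma> r \<in> Sset n"
proof -
  define N where "N = int n"
  obtain x y where xy: "x \<in> Pset n" "y \<in> Pset n" "r = zadd n x y" using assms(1) by (auto simp: Sset_def)
  obtain d where d: "(\<gamma> * d) mod N = 1 mod N" using assms(2) by (auto simp: zunit_def N_def)
  have P: "zsmult n \<gamma> z \<in> Pset n" if "z \<in> Pset n" for z
    unfolding zsmult_def
    apply (rule Pset_map[OF that assms(3)])
    subgoal for a b by (rule affine_inj[of \<gamma> d N a b 0]) (use d in \<open>auto simp: N_def\<close>)
    using assms(3) by auto
  have "zsmult n \<gamma> r = zadd n (zsmult n \<gamma> x) (zsmult n \<gamma> y)"
    using xy Pset_len[OF xy(1)] Pset_len[OF xy(2)]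
    by (intro nth_equalityI) (auto simp: zsmult_def mod_mult_right_eq mod_add_eq distrib_left)
  then show ?thesis using P xy by (auto simp: Sset_def)
qed

lemma part4:
  assumes "r \<in> Sset n" "\<gamma> \<in> {0..<int n}" "n \<ge> 2"
  shows "zadd n r (zsmult n \<gamma> (zone n)) \<in> Sset n"
proof -
  define N where "N = int n"
  obtain x y where xy: "x \<in> Pset n" "y \<in> Pset n" "r = zadd n x y" using assms(1) by (auto simp: Sset_def)
  define y' where "y' = map (\<lambda>b. (\<gamma> + 1 * b) mod N) y"
  have P: "y' \<in> Pset n"
    unfolding y'_def
    apply (rule Pset_map[OF xy(2) assms(3)])
    subgoal for a b by (rule affine_inj[of 1 1 N a b \<gamma>]) (auto simp: N_def)
    using assms(3) N_def by auto
  have "zadd n r (zsmult n \<gamma> (zone n)) = zadd n x y'"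
    using xy Pset_len[OF xy(1)] Pset_len[OF xy(2)] assms
    by (intro nth_equalityI) (auto simp: zsmult_one y'_def N_def mod_add_left_eq mod_add_right_eq ac_simps)
  then show ?thesis using P xy by (auto simp: Sset_def)
qed


lemma Pset_map2:
  assumes "x \<in> Pset n" "inj_on f (set x)" "\<And>a. a \<in> set x \<Longrightarrow> f a \<in> {0..<int n}"
  shows "map f x \<in> Pset n"
  using assms by (auto simp: Pset_def zvecs_def distinct_map)

lemma even_aux:
  fixes N k w w' :: int
  assumes "N = 2*k" "k \<ge> 1"
    "Y = (\<lambda>w. if odd w then (w-1) div 2 else w div 2 + k - 1)"
    "Z = (\<lambda>w. if odd w then (w+1) div 2 else if w = N - 2 then 0 else w div 2 + k + 1)"
    "w \<in> {1..<N}" "w' \<in> {1..<N}"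
  shows "Y w \<in> {0..<N}" "Z w \<in> {0..<N}" "Y w + Z w = w \<or> Y w + Z w = w + N"
    "Y w = Y w' \<Longrightarrow> w = w'" "Z w = Z w' \<Longrightarrow> w = w'"
  using assms(1,2,5,6) unfolding assms(3,4) by (auto split: if_splits; presburger)+

lemma part5:
  assumes "x \<in> Pset n" "n \<ge> 2"
  shows "x \<in> Sset n"
proof -
  define N where "N = int n"
  have N2: "N \<ge> 2" using assms N_def by simp
  have x: "length x = n - 1" "set x \<subseteq> {0..<N}" "distinct x"
    using assms(1) by (auto simp: Pset_def zvecs_def N_def)
  obtain m where m: "m \<in> {0..<N}" "m \<notin> set x"
  proof -
    have "\<not> {0..<N} \<subseteq> set x"
    proof
      assume "{0..<N} \<subseteq> set x"
      then have "card {0..<N} \<le> card (set x)" by (intro card_mono) auto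
      then show False using x(1,3) assms(2) N_def by (simp add: distinct_card N_def)
    qed
    then show ?thesis using that by blast
  qed
  show ?thesis
  proof (cases "odd N")
    case True
    define h where "h = (N+1) div 2"
    have h2: "2*h = N+1" using True h_def by presburger
    define y where "y = map (\<lambda>a. (0 + h*a) mod N) x"
    have yP: "y \<in> Pset n" unfolding y_def
      apply (rule Pset_map[OF assms(1,2)])
      subgoal for a b by (rule affine_inj[of h 2 N a b 0]) (use h2 in \<open>auto simp: N_def mult.commute\<close>)
      using N2 N_def by auto
    have e: "(h*a mod N + h*a mod N) mod N = a" if "a \<in> {0..<N}" for a
    proof -
      have "(h*a mod N + h*a mod N) mod N = (h*a + h*a) mod N" by (rule mod_add_eq)
      also have "\<dots> = ((2*h)*a) mod N" by (simp add: algebra_simps)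
      also have "\<dots> = (a + N*a) mod N" using h2 by (simp add: algebra_simps)
      also have "\<dots> = a" using that by simp
      finally show ?thesis .
    qed
    have "x = zadd n y y"
    proof (rule nth_equalityI)
      show "length x = length (zadd n y y)" by (simp add: y_def)
      fix i assume i: "i < length x"
      then have "x!i \<in> {0..<N}" using x(2) nth_mem by blast
      then show "x!i = zadd n y y ! i" using e[of "x!i"] i by (simp add: y_def N_def)
    qed
    then show ?thesis using yP by (auto simp: Sset_def)
  next
    case False
    define k where "k = N div 2"
    have Nk: "N = 2*k" "k \<ge> 1" using False N2 k_def by presburger+
    define Y where "Y = (\<lambda>w::int. if odd w then (w-1) div 2 else w div 2 + k - 1)"
    define Z where "Z = (\<lambda>w::int. if odd w then (w+1) div 2 else if w = N - 2 then 0 else w div 2 + k + 1)"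
    note EA = even_aux[OF Nk Y_def Z_def]
    define W where "W = (\<lambda>a. (-m + 1*a) mod N)"
    have Wr: "W a \<in> {1..<N}" if "a \<in> set x" for a
    proof -
      have a: "a \<in> {0..<N}" "a \<noteq> m" using that x m by auto
      have "W a \<noteq> 0"
      proof
        assume "W a = 0"
        then have "(-m + 1*a) mod N = (-m + 1*m) mod N" by (simp add: W_def)
        then have "a = m" using affine_inj[of 1 1 N a m "-m"] a m by simp
        then show False using a by simp
      qed
      moreover have "W a \<in> {0..<N}" using N2 by (simp add: W_def)
      ultimately show ?thesis by auto
    qed
    have Winj: "W a = W b \<Longrightarrow> a = b" if "a \<in> set x" "b \<in> set x" for a b
    proof -
      assume "W a = W b"
      moreover have "a \<in> {0..<N}" "b \<in> {0..<N}" using that x(2) by auto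
      ultimately show "a = b" by (intro affine_inj[of 1 1 N a b "-m"]) (auto simp: W_def)
    qed
    define y where "y = map (\<lambda>a. (m + 1 * Y (W a)) mod N) x"
    define z where "z = map (\<lambda>a. Z (W a)) x"
    have yP: "y \<in> Pset n" unfolding y_def
    proof (rule Pset_map2[OF assms(1)])
      show "inj_on (\<lambda>a. (m + 1 * Y (W a)) mod N) (set x)"
      proof (rule inj_onI)
        fix a b assume ab: "a \<in> set x" "b \<in> set x" "(m + 1 * Y (W a)) mod N = (m + 1 * Y (W b)) mod N"
        have ya: "Y (W a) \<in> {0..<N}" by (rule EA(1)[OF Wr[OF ab(1)] Wr[OF ab(1)]])
        have yb: "Y (W b) \<in> {0..<N}" by (rule EA(1)[OF Wr[OF ab(2)] Wr[OF ab(2)]])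
        have "Y (W a) = Y (W b)"
          by (rule affine_inj[of 1 1 N "Y (W a)" "Y (W b)" m]) (use ab ya yb in auto)
        then show "a = b" using EA(4)[OF Wr[OF ab(1)] Wr[OF ab(2)]] Winj ab by auto
      qed
      show "\<And>a. a \<in> set x \<Longrightarrow> (m + 1 * Y (W a)) mod N \<in> {0..<int n}" using N2 N_def by auto
    qed
    have zP: "z \<in> Pset n" unfolding z_def
    proof (rule Pset_map2[OF assms(1)])
      show "inj_on (\<lambda>a. Z (W a)) (set x)"
        using EA(5)[OF Wr Wr] Winj by (meson inj_onI)
      show "\<And>a. a \<in> set x \<Longrightarrow> Z (W a) \<in> {0..<int n}" using EA(2)[OF Wr Wr] N_def by blast
    qed
    have e: "((m + 1 * Y (W a)) mod N + Z (W a)) mod N = a" if "a \<in> set x" for a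
    proof -
      have s: "(Y (W a) + Z (W a)) mod N = W a"
        using EA(3)[OF Wr[OF that] Wr[OF that]] Wr[OF that] by auto
      have "((m + 1 * Y (W a)) mod N + Z (W a)) mod N = (m + (Y (W a) + Z (W a))) mod N"
        by (simp add: mod_add_left_eq add.assoc)
      also have "\<dots> = (m + (Y (W a) + Z (W a)) mod N) mod N" by (simp add: mod_add_right_eq)
      also have "\<dots> = (m + (-m + 1*a) mod N) mod N" using s by (simp add: W_def)
      also have "\<dots> = a mod N" by (simp add: mod_add_right_eq)
      also have "\<dots> = a" using that x(2) by auto
      finally show ?thesis .
    qed
    have "x = zadd n y z"
    proof (rule nth_equalityI)
      show "length x = length (zadd n y z)" by (simp add: y_def z_def)
      fix i assume i: "i < length x"
      then have "x!i \<in> set x" using nth_mem by blast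
      then show "x!i = zadd n y z ! i" using e[of "x!i"] i by (simp add: y_def z_def N_def)
    qed
    then show ?thesis using yP zP by (auto simp: Sset_def)
  qed
qed

theorem proposition5p1:
  fixes n :: nat
  assumes "n \<ge> 2"
  shows "(\<forall>\<gamma>\<in>{0..<int n}. zsmult n \<gamma> (zone n) \<in> Sset n)
    \<and> (\<forall>r\<in>Sset n. \<forall>\<sigma>. \<sigma> permutes {..<n - 1} \<longrightarrow> permute_coords \<sigma> r \<in> Sset n)
    \<and> (\<forall>r\<in>Sset n. \<forall>\<gamma>. zunit n \<gamma> \<longrightarrow> zsmult n \<gamma> r \<in> Sset n)
    \<and> (\<forall>r\<in>Sset n. \<forall>\<gamma>\<in>{0..<int n}. zadd n r (zsmult n \<gamma> (zone n)) \<in> Sset n)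
    \<and> Pset n \<subseteq> Sset n"
  using part1[OF assms] part2 part3[OF _ _ assms] part4[OF _ _ assms] part5[OF _ assms] by blast

end
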